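(* Let $m$ and $n$ be positive integers. A layer-rainbow latin cube of order $m$ can be extended to (i.e., embedded as the $m\times m\times m$ subarray on the first $m$ indices in each coordinate of) a layer-rainbow latin cube of order $n$ if and only if $n\geq 2m$.
   Context: An $n\times n\times n$ array $L$ has cells indexed by triples $(i,j,k)$ with $i,j,k\in\{1,\dots,n\}$. A layer of $L$ is the set of cells obtained by fixing one coordinate (so there are $3n$ layers, each containing $n^2$ cells). $L$ is a layer-rainbow latin cube of order $n$ if each cell is filled with one of $n^2$ symbols such that every layer contains every symbol exactly once. A layer-rainbow latin cube $M$ of order $m$ is extended to a layer-rainbow latin cube $L$ of order $n$ if $L$ restricted to the cells $\{1,\dots,m\}^3$ coincides with $M$ (the $m^2$ symbols of $M$ being among the $n^2$ symbols of $L$). *)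

theory Defs
  imports Main
begin

text \<open>Symbols are natural numbers
  (any countably infinite supply of symbols would do).\<close>
definition layer_rainbow :: "nat \<Rightarrow> nat set \<Rightarrow> (nat \<Rightarrow> nat \<Rightarrow> nat \<Rightarrow> nat) \<Rightarrow> bool" where
  "layer_rainbow n S L \<longleftrightarrow>
     card S = n ^ 2 \<and>
     (\<forall>i\<in>{1..n}. bij_betw (\<lambda>(j, k). L i j k) ({1..n} \<times> {1..n}) S) \<and>
     (\<forall>j\<in>{1..n}. bij_betw (\<lambda>(i, k). L i j k) ({1..n} \<times> {1..n}) S) \<and>
     (\<forall>k\<in>{1..n}. bij_betw (\<lambda>(i, j). L i j k) ({1..n} \<times> {1..n}) S)"

definition extends_cube :: "nat \<Rightarrow> nat set \<Rightarrow> (nat \<Rightarrow> nat \<Rightarrow> nat \<Rightarrow> nat) \<Rightarrow>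
    nat \<Rightarrow> nat set \<Rightarrow> (nat \<Rightarrow> nat \<Rightarrow> nat \<Rightarrow> nat) \<Rightarrow> bool" where
  "extends_cube m S M n T L \<longleftrightarrow>
     S \<subseteq> T \<and> (\<forall>i\<in>{1..m}. \<forall>j\<in>{1..m}. \<forall>k\<in>{1..m}. L i j k = M i j k)"

end

theory Submission
  imports Defs "HOL-Library.Nat_Bijection"
begin

definition hh :: "nat \<Rightarrow> nat \<Rightarrow> nat" where
  "hh k d = (if 2*d < k then 2*d else 2*d + (if even k then 1 else 0) - k)"
definition gg :: "nat \<Rightarrow> nat \<Rightarrow> nat" where
  "gg k d = (if 2*d < k then d else d + (if even k then 1 else 0))"

lemma hh_lt: "d + 1 < k \<Longrightarrow> hh k d < k"
  unfolding hh_def by auto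
lemma gg_lt: "d + 1 < k \<Longrightarrow> gg k d < k"
  unfolding gg_def by auto
lemma hh_inj: "d + 1 < k \<Longrightarrow> d' + 1 < k \<Longrightarrow> hh k d = hh k d' \<Longrightarrow> d = d'"
  unfolding hh_def by (auto split: if_splits; presburger)
lemma gg_inj: "d + 1 < k \<Longrightarrow> d' + 1 < k \<Longrightarrow> gg k d = gg k d' \<Longrightarrow> d = d'"
  unfolding gg_def by (auto split: if_splits)
lemma hh_gg: "d + 1 < k \<Longrightarrow> hh k d mod k = (d + gg k d) mod k"
proof -
  assume a: "d + 1 < k"
  show ?thesis
  proof (cases "2*d < k")
    case True thus ?thesis by (simp add: hh_def gg_def)
  next
    case False
    hence "hh k d = (d + gg k d) - k" "d + gg k d \<ge> k" by (auto simp: hh_def gg_def)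
    thus ?thesis by (simp add: le_mod_geq)
  qed
qed

lemma K1: "(a::nat) < k \<Longrightarrow> b < k \<Longrightarrow> (a + c) mod k = (b + c) mod k \<Longrightarrow> a = b"
proof -
  assume a: "a < k" "b < k" "(a + c) mod k = (b + c) mod k"
  have "a \<le> b \<Longrightarrow> a = b"
  proof -
    assume "a \<le> b"
    then have "k dvd (b + c) - (a + c)" using a(3) mod_eq_dvd_iff_nat by (metis add_le_mono1)
    then have "k dvd b - a" by simp
    moreover have "b - a < k" using a by linarith
    ultimately have "\<not> 0 < b - a" using dvd_imp_le[of k "b - a"] by linarith
    then show "a = b" using \<open>a \<le> b\<close> by linarith
  qed
  moreover have "b \<le> a \<Longrightarrow> a = b"
  proof -
    assume "b \<le> a"
    then have "k dvd (a + c) - (b + c)" using a(3) mod_eq_dvd_iff_nat by (metis add_le_mono1)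
    then have "k dvd a - b" by simp
    moreover have "a - b < k" using a by linarith
    ultimately have "\<not> 0 < a - b" using dvd_imp_le[of k "a - b"] by linarith
    then show "a = b" using \<open>b \<le> a\<close> by linarith
  qed
  ultimately show ?thesis by linarith
qed
lemma K1': "(a::nat) < k \<Longrightarrow> b < k \<Longrightarrow> (c + a) mod k = (c + b) mod k \<Longrightarrow> a = b"
  by (metis K1 add.commute)
lemma K2: "(x::nat) < k \<Longrightarrow> y < k \<Longrightarrow> (x + (y + k - x) mod k) mod k = y"
proof -
  assume "x < k" "y < k"
  then have "(x + (y + k - x) mod k) mod k = (x + (y + k - x)) mod k" by (metis mod_add_right_eq)
  also have "x + (y + k - x) = y + k" using \<open>x < k\<close> by simp
  finally show ?thesis using \<open>y < k\<close> by simp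
qed


definition dd :: "nat \<Rightarrow> nat \<Rightarrow> nat \<Rightarrow> nat" where "dd k x y = (y + k - x) mod k"
definition BB :: "nat \<Rightarrow> nat \<Rightarrow> nat \<Rightarrow> nat \<Rightarrow> nat" where
  "BB m k x y = (if k - m \<le> dd k x y then dd k x y - (k - m) else m + (x + hh k (dd k x y)) mod k)"
definition PP :: "nat \<Rightarrow> nat \<Rightarrow> (nat \<Rightarrow> nat) \<Rightarrow> (nat \<Rightarrow> nat) \<Rightarrow> nat \<Rightarrow> nat \<Rightarrow> nat" where
  "PP m k e e' i j = (if i < m \<and> j < m then (i + j) mod m else if i < m then m + ((j - m) + e i) mod k
     else if j < m then m + ((i - m) + e' j) mod k else BB m k (i - m) (j - m))"

lemma dd_lt: "0 < k \<Longrightarrow> dd k x y < k" by (simp add: dd_def)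
lemma dd_inj_y: "x < k \<Longrightarrow> y < k \<Longrightarrow> y' < k \<Longrightarrow> dd k x y = dd k x y' \<Longrightarrow> y = y'"
proof -
  assume a: "x < k" "y < k" "y' < k" "dd k x y = dd k x y'"
  have "y + k - x = y + (k - x)" "y' + k - x = y' + (k - x)" using a by auto
  then show ?thesis using a K1[of y k y' "k - x"] by (simp add: dd_def)
qed
lemma dd_inj_x: "x < k \<Longrightarrow> x' < k \<Longrightarrow> y < k \<Longrightarrow> dd k x y = dd k x' y \<Longrightarrow> x = x'"
proof -
  assume a: "x < k" "x' < k" "y < k" "dd k x y = dd k x' y"
  have "(x + dd k x y) mod k = y" "(x' + dd k x' y) mod k = y" using K2 a unfolding dd_def by blast+
  then show ?thesis using a K1[of x k x' "dd k x y"] by simp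
qed
lemma BB_col: "x < k \<Longrightarrow> y < k \<Longrightarrow> dd k x y + 1 < k \<Longrightarrow>
   (x + hh k (dd k x y)) mod k = (y + gg k (dd k x y)) mod k"
proof -
  assume a: "x < k" "y < k" "dd k x y + 1 < k"
  define d where "d = dd k x y"
  have hg: "hh k d mod k = (d + gg k d) mod k" using hh_gg a(3) d_def by blast
  have "(x + hh k d) mod k = (x + hh k d mod k) mod k" by (metis mod_add_right_eq)
  also have "\<dots> = (x + (d + gg k d) mod k) mod k" by (simp only: hg)
  also have "\<dots> = ((x + d) + gg k d) mod k" by (metis mod_add_right_eq add.assoc)
  also have "\<dots> = ((x + d) mod k + gg k d) mod k" by (metis mod_add_left_eq)
  also have "(x + d) mod k = y" using K2[OF a(1) a(2)] unfolding d_def dd_def .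
  finally show ?thesis using d_def by simp
qed

lemma BB_A: "k - m \<le> dd k x y \<Longrightarrow> 0 < k \<Longrightarrow> BB m k x y < m"
  using dd_lt[of k x y] by (auto simp: BB_def)
lemma BB_B: "\<not> k - m \<le> dd k x y \<Longrightarrow> BB m k x y = m + (x + hh k (dd k x y)) mod k"
  by (simp add: BB_def)

lemma BB_row_inj:
  assumes "0 < m" "m \<le> k" "x < k" "y < k" "y' < k" "BB m k x y = BB m k x y'"
  shows "y = y'"
proof -
  have k0: "0 < k" using assms by simp
  consider "k - m \<le> dd k x y" "k - m \<le> dd k x y'" | "\<not> k - m \<le> dd k x y" "\<not> k - m \<le> dd k x y'"
    | "k - m \<le> dd k x y" "\<not> k - m \<le> dd k x y'" | "\<not> k - m \<le> dd k x y" "k - m \<le> dd k x y'" by blast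
  then show ?thesis
  proof cases
    case 1
    then have "dd k x y = dd k x y'" using assms(6) by (simp add: BB_def)
    then show ?thesis using dd_inj_y assms by blast
  next
    case 2
    then have "(x + hh k (dd k x y)) mod k = (x + hh k (dd k x y')) mod k" using assms(6) by (simp add: BB_def)
    moreover have "dd k x y + 1 < k" "dd k x y' + 1 < k" using 2 assms by auto
    ultimately have "hh k (dd k x y) = hh k (dd k x y')" using K1' hh_lt by blast
    then have "dd k x y = dd k x y'" using hh_inj \<open>dd k x y + 1 < k\<close> \<open>dd k x y' + 1 < k\<close> by blast
    then show ?thesis using dd_inj_y assms by blast
  next
    case 3 then show ?thesis using BB_A[OF 3(1) k0] BB_B[OF 3(2)] assms(6) by simp
  next
    case 4 then show ?thesis using BB_A[OF 4(2) k0] BB_B[OF 4(1)] assms(6) by simp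
  qed
qed

lemma BB_col_inj:
  assumes "0 < m" "m \<le> k" "x < k" "x' < k" "y < k" "BB m k x y = BB m k x' y"
  shows "x = x'"
proof -
  have k0: "0 < k" using assms by simp
  consider "k - m \<le> dd k x y" "k - m \<le> dd k x' y" | "\<not> k - m \<le> dd k x y" "\<not> k - m \<le> dd k x' y"
    | "k - m \<le> dd k x y" "\<not> k - m \<le> dd k x' y" | "\<not> k - m \<le> dd k x y" "k - m \<le> dd k x' y" by blast
  then show ?thesis
  proof cases
    case 1
    then have "dd k x y = dd k x' y" using assms(6) by (simp add: BB_def)
    then show ?thesis using dd_inj_x assms by blast
  next
    case 2
    then have "(x + hh k (dd k x y)) mod k = (x' + hh k (dd k x' y)) mod k" using assms(6) by (simp add: BB_def)
    moreover have d1: "dd k x y + 1 < k" "dd k x' y + 1 < k" using 2 assms by auto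
    ultimately have "(y + gg k (dd k x y)) mod k = (y + gg k (dd k x' y)) mod k"
      using BB_col assms by metis
    then have "gg k (dd k x y) = gg k (dd k x' y)" using K1' gg_lt d1 by blast
    then have "dd k x y = dd k x' y" using gg_inj d1 by blast
    then show ?thesis using dd_inj_x assms by blast
  next
    case 3 then show ?thesis using BB_A[OF 3(1) k0] BB_B[OF 3(2)] assms(6) by simp
  next
    case 4 then show ?thesis using BB_A[OF 4(2) k0] BB_B[OF 4(1)] assms(6) by simp
  qed
qed


lemma K3: "(i::nat) < m \<Longrightarrow> j < m \<Longrightarrow> j' < m \<Longrightarrow> (i + j) mod m = (i + j') mod m \<Longrightarrow> j = j'"
  using K1' by blast

lemma PP_row_inj:
  assumes m: "0 < m" "m \<le> k"
    and e: "bij_betw e {..<m} ({..<k} - gg k ` {..<k-m})"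
    and e': "bij_betw e' {..<m} ({..<k} - hh k ` {..<k-m})"
    and ij: "i < m + k" "j < m + k" "j' < m + k" and eq: "PP m k e e' i j = PP m k e e' i j'"
  shows "j = j'"
proof (cases "i < m")
  case True
  show ?thesis
  proof (cases "j < m")
    case jT: True
    show ?thesis
    proof (cases "j' < m")
      case True then show ?thesis using eq jT \<open>i < m\<close> K3[of i m j j'] by (simp add: PP_def)
    next
      case False then show ?thesis using eq jT \<open>i < m\<close> mod_less_divisor[OF m(1), of "i+j"] by (simp add: PP_def)
    qed
  next
    case jF: False
    show ?thesis
    proof (cases "j' < m")
      case True then show ?thesis using eq jF \<open>i < m\<close> mod_less_divisor[OF m(1), of "i+j'"] by (simp add: PP_def)
    next
      case False
      then have "(j - m + e i) mod k = (j' - m + e i) mod k" using eq jF \<open>i < m\<close> by (simp add: PP_def)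
      then have "j - m = j' - m" using K1[of "j - m" k "j' - m" "e i"] ij by linarith
      then show ?thesis using False jF by linarith
    qed
  qed
next
  case iF: False
  define x where "x = i - m"
  have x: "x < k" using ij iF x_def by linarith
  have k0: "0 < k" using m by simp
  have e'k: "\<And>c. c < m \<Longrightarrow> e' c < k \<and> e' c \<notin> hh k ` {..<k-m}" using e' unfolding bij_betw_def by blast
  show ?thesis
  proof (cases "j < m")
    case jT: True
    show ?thesis
    proof (cases "j' < m")
      case True
      then have "(x + e' j) mod k = (x + e' j') mod k" using eq jT iF x_def by (simp add: PP_def add.commute)
      then have "e' j = e' j'" using K1' e'k jT True by blast
      then show ?thesis using e' jT True unfolding bij_betw_def inj_on_def by blast
    next
      case False
      define y where "y = j' - m"
      have y: "y < k" using ij False y_def by linarith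
      have P1: "PP m k e e' i j = m + (x + e' j) mod k" using jT iF x_def by (simp add: PP_def add.commute)
      have P2: "PP m k e e' i j' = BB m k x y" using False iF x_def y_def by (simp add: PP_def)
      show ?thesis
      proof (cases "k - m \<le> dd k x y")
        case True then show ?thesis using BB_A[OF True k0] P1 P2 eq by simp
      next
        case dF: False
        then have "(x + e' j) mod k = (x + hh k (dd k x y)) mod k" using BB_B[OF dF] P1 P2 eq by simp
        moreover have "hh k (dd k x y) < k" using hh_lt dF m by simp
        ultimately have "e' j = hh k (dd k x y)" using K1' e'k jT by blast
        then show ?thesis using e'k jT dF by force
      qed
    qed
  next
    case jF: False
    define y where "y = j - m"
    have y: "y < k" using ij jF y_def by linarith
    show ?thesis
    proof (cases "j' < m")
      case True
      have P1: "PP m k e e' i j' = m + (x + e' j') mod k" using True iF x_def by (simp add: PP_def add.commute)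
      have P2: "PP m k e e' i j = BB m k x y" using jF iF x_def y_def by (simp add: PP_def)
      show ?thesis
      proof (cases "k - m \<le> dd k x y")
        case True then show ?thesis using BB_A[OF True k0] P1 P2 eq by simp
      next
        case dF: False
        then have "(x + e' j') mod k = (x + hh k (dd k x y)) mod k" using BB_B[OF dF] P1 P2 eq by simp
        moreover have "hh k (dd k x y) < k" using hh_lt dF m by simp
        ultimately have "e' j' = hh k (dd k x y)" using K1' e'k True by blast
        then show ?thesis using e'k True dF by force
      qed
    next
      case False
      define y' where "y' = j' - m"
      have y': "y' < k" using ij False y'_def by linarith
      have "BB m k x y = BB m k x y'" using eq jF False iF x_def y_def y'_def by (simp add: PP_def)
      then have "y = y'" using BB_row_inj m x y y' by blast
      then show ?thesis using y_def y'_def jF False by linarith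
    qed
  qed
qed


lemma PP_col_inj:
  assumes m: "0 < m" "m \<le> k"
    and e: "bij_betw e {..<m} ({..<k} - gg k ` {..<k-m})"
    and e': "bij_betw e' {..<m} ({..<k} - hh k ` {..<k-m})"
    and ij: "j < m + k" "i < m + k" "i' < m + k" and eq: "PP m k e e' i j = PP m k e e' i' j"
  shows "i = i'"
proof -
  have k0: "0 < k" using m by simp
  have ek: "\<And>c. c < m \<Longrightarrow> e c < k \<and> e c \<notin> gg k ` {..<k-m}" using e unfolding bij_betw_def by blast
  have e'k: "\<And>c. c < m \<Longrightarrow> e' c < k" using e' unfolding bij_betw_def by blast
  show ?thesis
  proof (cases "j < m")
    case jT: True
    show ?thesis
    proof (cases "i < m")
      case iT: True
      show ?thesis
      proof (cases "i' < m")
        case True then show ?thesis using eq jT iT K1[of i m i' j] by (simp add: PP_def)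
      next
        case False then show ?thesis using eq jT iT mod_less_divisor[OF m(1), of "i+j"] by (simp add: PP_def)
      qed
    next
      case iF: False
      show ?thesis
      proof (cases "i' < m")
        case True then show ?thesis using eq jT iF mod_less_divisor[OF m(1), of "i'+j"] by (simp add: PP_def)
      next
        case False
        then have "(i - m + e' j) mod k = (i' - m + e' j) mod k" using eq jT iF by (simp add: PP_def)
        then have "i - m = i' - m" using K1[of "i - m" k "i' - m" "e' j"] ij by linarith
        then show ?thesis using False iF by linarith
      qed
    qed
  next
    case jF: False
    define y where "y = j - m"
    have y: "y < k" using ij jF y_def by linarith
    have cross: False if iT: "i1 < m" and iF: "\<not> i2 < m" and i2: "i2 < m + k"
        and eq1: "PP m k e e' i1 j = PP m k e e' i2 j" for i1 i2
    proof -
      define x where "x = i2 - m"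
      have x: "x < k" using i2 iF x_def by linarith
      have P1: "PP m k e e' i1 j = m + (y + e i1) mod k" using iT jF y_def by (simp add: PP_def)
      have P2: "PP m k e e' i2 j = BB m k x y" using iF jF x_def y_def by (simp add: PP_def)
      show False
      proof (cases "k - m \<le> dd k x y")
        case True then show ?thesis using BB_A[OF True k0] P1 P2 eq1 by simp
      next
        case dF: False
        then have d1: "dd k x y + 1 < k" using m by simp
        have "(y + e i1) mod k = (x + hh k (dd k x y)) mod k" using BB_B[OF dF] P1 P2 eq1 by simp
        also have "\<dots> = (y + gg k (dd k x y)) mod k" using BB_col x y d1 by blast
        finally have "e i1 = gg k (dd k x y)" using K1' ek iT gg_lt d1 by blast
        then show ?thesis using ek iT dF by force
      qed
    qed
    show ?thesis
    proof (cases "i < m")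
      case iT: True
      show ?thesis
      proof (cases "i' < m")
        case True
        then have "(y + e i) mod k = (y + e i') mod k" using eq jF iT y_def by (simp add: PP_def add.commute)
        then have "e i = e i'" using K1' ek iT True by blast
        then show ?thesis using e iT True unfolding bij_betw_def inj_on_def by blast
      next
        case False then show ?thesis using cross[OF iT False ij(3) eq] by blast
      qed
    next
      case iF: False
      show ?thesis
      proof (cases "i' < m")
        case True then show ?thesis using cross[OF True iF ij(2) eq[symmetric]] by blast
      next
        case False
        define x where "x = i - m"
        define x' where "x' = i' - m"
        have "x < k" "x' < k" using ij iF False x_def x'_def by linarith+
        have "BB m k x y = BB m k x' y" using eq jF False iF x_def y_def x'_def by (simp add: PP_def)
        then have "x = x'" using BB_col_inj m \<open>x < k\<close> \<open>x' < k\<close> y by blast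
        then show ?thesis using x_def x'_def iF False by linarith
      qed
    qed
  qed
qed

lemma BB_lt: "0 < m \<Longrightarrow> m \<le> k \<Longrightarrow> BB m k x y < m + k"
proof -
  assume a: "0 < m" "m \<le> k"
  have k0: "0 < k" using a by simp
  show ?thesis
  proof (cases "k - m \<le> dd k x y")
    case True
    have "dd k x y < k" using dd_lt[OF k0] .
    then have "dd k x y - (k - m) < m" using True a by linarith
    then show ?thesis using True by (simp add: BB_def)
  next
    case False
    have "(x + hh k (dd k x y)) mod k < k" using mod_less_divisor[OF k0] .
    then show ?thesis using False by (simp add: BB_def)
  qed
qed

lemma PP_range: "0 < m \<Longrightarrow> m \<le> k \<Longrightarrow> i < m + k \<Longrightarrow> j < m + k \<Longrightarrow> PP m k e e' i j < m + k"
proof -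
  assume a: "0 < m" "m \<le> k" "i < m + k" "j < m + k"
  have k0: "0 < k" using a by simp
  have r1: "(i + j) mod m < m" using mod_less_divisor[OF a(1)] .
  have r2: "\<And>z. z mod k < k" using mod_less_divisor[OF k0] .
  show ?thesis
    unfolding PP_def using r1 r2 BB_lt[OF a(1,2)] by (simp split: if_split) 
qed

lemma latin0:
  fixes m k :: nat
  assumes m: "0 < m" "m \<le> k"
  shows "\<exists>P. (\<forall>i<m+k. inj_on (P i) {..<m+k}) \<and> (\<forall>j<m+k. inj_on (\<lambda>i. P i j) {..<m+k})
     \<and> (\<forall>i<m+k. \<forall>j<m+k. P i j < m+k) \<and> (\<forall>i<m. \<forall>j<m. P i j < m)"
proof -
  have hinj: "inj_on (hh k) {..<k-m}"
  proof (rule inj_onI)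
    fix a b assume "a \<in> {..<k-m}" "b \<in> {..<k-m}" "hh k a = hh k b"
    then show "a = b" using hh_inj[of a k b] m by simp
  qed
  have ginj: "inj_on (gg k) {..<k-m}"
  proof (rule inj_onI)
    fix a b assume "a \<in> {..<k-m}" "b \<in> {..<k-m}" "gg k a = gg k b"
    then show "a = b" using gg_inj[of a k b] m by simp
  qed
  have hsub: "hh k ` {..<k-m} \<subseteq> {..<k}" using hh_lt m by auto
  have gsub: "gg k ` {..<k-m} \<subseteq> {..<k}" using gg_lt m by auto
  have c1: "card ({..<k} - hh k ` {..<k-m}) = m" using card_Diff_subset[OF _ hsub] card_image[OF hinj] m by simp
  have c2: "card ({..<k} - gg k ` {..<k-m}) = m" using card_Diff_subset[OF _ gsub] card_image[OF ginj] m by simp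
  obtain e where e: "bij_betw e {..<m} ({..<k} - gg k ` {..<k-m})"
    using finite_same_card_bij[of "{..<m}" "{..<k} - gg k ` {..<k-m}"] c2 by auto
  obtain e' where e': "bij_betw e' {..<m} ({..<k} - hh k ` {..<k-m})"
    using finite_same_card_bij[of "{..<m}" "{..<k} - hh k ` {..<k-m}"] c1 by auto
  show ?thesis
  proof (intro exI[of _ "PP m k e e'"] conjI allI impI)
    fix i assume i: "i < m + k" show "inj_on (PP m k e e' i) {..<m+k}"
    proof (rule inj_onI)
      fix j j' assume "j \<in> {..<m+k}" "j' \<in> {..<m+k}" "PP m k e e' i j = PP m k e e' i j'"
      then show "j = j'" using PP_row_inj[OF m e e' i] by simp
    qed
  next
    fix j assume j: "j < m + k" show "inj_on (\<lambda>i. PP m k e e' i j) {..<m+k}"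
    proof (rule inj_onI)
      fix i i' assume "i \<in> {..<m+k}" "i' \<in> {..<m+k}" "PP m k e e' i j = PP m k e e' i' j"
      then show "i = i'" using PP_col_inj[OF m e e' j] by simp
    qed
  next
    fix i j assume "i < m + k" "j < m + k" then show "PP m k e e' i j < m + k" using PP_range m by blast
  next
    fix i j assume "i < m" "j < m" then show "PP m k e e' i j < m" using m by (simp add: PP_def)
  qed
qed


lemma latin1:
  fixes m n :: nat
  assumes "0 < m" "2 * m \<le> n"
  shows "\<exists>Q. (\<forall>i\<in>{1..n}. inj_on (Q i) {1..n}) \<and> (\<forall>j\<in>{1..n}. inj_on (\<lambda>i. Q i j) {1..n})
     \<and> (\<forall>i\<in>{1..n}. \<forall>j\<in>{1..n}. Q i j < n) \<and> (\<forall>i\<in>{1..m}. \<forall>j\<in>{1..m}. Q i j < m)"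
proof -
  have mk: "m \<le> n - m" and nn: "m + (n - m) = n" using assms by auto
  obtain P where P1: "\<forall>i<n. inj_on (P i) {..<n}" and P2: "\<forall>j<n. inj_on (\<lambda>i. P i j) {..<n}"
     and P3: "\<forall>i<n. \<forall>j<n. P i j < n" and P4: "\<forall>i<m. \<forall>j<m. P i j < m"
    using latin0[OF assms(1) mk] unfolding nn by blast
  show ?thesis
  proof (intro exI[of _ "\<lambda>i j. P (i - 1) (j - 1)"] conjI ballI)
    fix i assume i: "i \<in> {1..n}"
    show "inj_on (\<lambda>j. P (i - 1) (j - 1)) {1..n}"
    proof (rule inj_onI)
      fix j j' assume "j \<in> {1..n}" "j' \<in> {1..n}" "P (i - 1) (j - 1) = P (i - 1) (j' - 1)"
      moreover have "inj_on (P (i - 1)) {..<n}" using P1 i by auto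
      ultimately have "j - 1 = j' - 1" using inj_onD[of "P (i - 1)" "{..<n}" "j - 1" "j' - 1"] by auto
      then show "j = j'" using \<open>j \<in> {1..n}\<close> \<open>j' \<in> {1..n}\<close> by (simp only: atLeastAtMost_iff) linarith
    qed
  next
    fix j assume j: "j \<in> {1..n}"
    show "inj_on (\<lambda>i. P (i - 1) (j - 1)) {1..n}"
    proof (rule inj_onI)
      fix i i' assume "i \<in> {1..n}" "i' \<in> {1..n}" "P (i - 1) (j - 1) = P (i' - 1) (j - 1)"
      moreover have "inj_on (\<lambda>i. P i (j - 1)) {..<n}" using P2 j by auto
      ultimately have "i - 1 = i' - 1" using inj_onD[of "\<lambda>i. P i (j - 1)" "{..<n}" "i - 1" "i' - 1"] by auto
      then show "i = i'" using \<open>i \<in> {1..n}\<close> \<open>i' \<in> {1..n}\<close> by (simp only: atLeastAtMost_iff) linarith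
    qed
  next
    fix i j assume "i \<in> {1..n}" "j \<in> {1..n}"
    then have "i - 1 < n" "j - 1 < n" by auto
    then show "P (i - 1) (j - 1) < n" using P3 by blast
  next
    fix i j assume "i \<in> {1..m}" "j \<in> {1..m}"
    then have "i - 1 < m" "j - 1 < m" by auto
    then show "P (i - 1) (j - 1) < m" using P4 by blast
  qed
qed

lemma bij_from_inj:
  assumes "inj_on f A" "f ` A \<subseteq> B" "card A = card B" "finite B"
  shows "bij_betw f A B"
proof -
  have "card (f ` A) = card B" using card_image[OF assms(1)] assms(3) by simp
  then have "f ` A = B" using card_subset_eq[OF assms(4) assms(2)] by simp
  then show ?thesis unfolding bij_betw_def using assms(1) by simp
qed

lemma layer_in:
  assumes F: "bij_betw F U V" and U0: "U0 \<subseteq> U" and FU0: "F ` U0 \<subseteq> V0" and cU0: "card U0 = card V0"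
    and V0: "V0 \<subseteq> V" and fU: "finite U"
    and Mf: "bij_betw Mf U0 S" and enc: "inj_on enc (V - V0)" and dis: "S \<inter> enc ` (V - V0) = {}"
  shows "bij_betw (\<lambda>u. if u \<in> U0 then Mf u else if F u \<in> V0 then \<psi> (F u) else enc (F u)) U (S \<union> enc ` (V - V0))"
proof -
  have FU: "F ` U = V" and Finj: "inj_on F U" using F unfolding bij_betw_def by auto
  have fV: "finite V" using FU fU by blast
  have "card (F ` U0) = card U0" using card_image inj_on_subset[OF Finj U0] by blast
  then have FU0': "F ` U0 = V0" using card_subset_eq[OF finite_subset[OF V0 fV] FU0] cU0 by simp
  have FD: "F ` (U - U0) = V - V0" using inj_on_image_set_diff[OF Finj _ U0] FU FU0' by simp
  let ?G = "\<lambda>u. if u \<in> U0 then Mf u else if F u \<in> V0 then \<psi> (F u) else enc (F u)"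
  have b1: "bij_betw ?G U0 S" using bij_betw_cong[of U0 ?G Mf S] Mf by simp
  have "inj_on (\<lambda>u. enc (F u)) (U - U0)"
    using comp_inj_on[OF inj_on_subset[OF Finj, of "U - U0"]] enc FD unfolding o_def by auto
  then have b2': "bij_betw (\<lambda>u. enc (F u)) (U - U0) (enc ` (V - V0))"
    unfolding bij_betw_def using FD by (simp add: image_image[symmetric])
  have "\<forall>u\<in>U - U0. ?G u = enc (F u)" using FD by auto
  then have b2: "bij_betw ?G (U - U0) (enc ` (V - V0))" using bij_betw_cong[of "U - U0" ?G "\<lambda>u. enc (F u)"] b2' by simp
  have "bij_betw ?G (U0 \<union> (U - U0)) (S \<union> enc ` (V - V0))"
    using bij_betw_combine[OF b1 b2 dis] .
  moreover have "U0 \<union> (U - U0) = U" using U0 by blast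
  ultimately show ?thesis by simp
qed

lemma layer_out:
  assumes F: "bij_betw F U V" and V0: "V0 \<subseteq> V" and psi: "bij_betw \<psi> V0 S"
    and enc: "inj_on enc (V - V0)" and dis: "S \<inter> enc ` (V - V0) = {}"
  shows "bij_betw (\<lambda>u. if F u \<in> V0 then \<psi> (F u) else enc (F u)) U (S \<union> enc ` (V - V0))"
proof -
  let ?H = "\<lambda>v. if v \<in> V0 then \<psi> v else enc v"
  have b1: "bij_betw ?H V0 S" using bij_betw_cong[of V0 ?H \<psi> S] psi by simp
  have b2': "bij_betw enc (V - V0) (enc ` (V - V0))" using enc by (simp add: bij_betw_def)
  have b2: "bij_betw ?H (V - V0) (enc ` (V - V0))" using bij_betw_cong[of "V - V0" ?H enc] b2' by simp
  have "bij_betw ?H (V0 \<union> (V - V0)) (S \<union> enc ` (V - V0))" using bij_betw_combine[OF b1 b2 dis] .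
  moreover have "V0 \<union> (V - V0) = V" using V0 by blast
  ultimately have "bij_betw ?H V (S \<union> enc ` (V - V0))" by simp
  from bij_betw_trans[OF F this] show ?thesis by (simp add: o_def)
qed

theorem theorem1:
  fixes m n :: nat and S :: "nat set" and M :: "nat \<Rightarrow> nat \<Rightarrow> nat \<Rightarrow> nat"
  assumes "0 < m" and "m < n" and "layer_rainbow m S M"
  shows "(\<exists>T L. layer_rainbow n T L \<and> extends_cube m S M n T L) \<longleftrightarrow> 2 * m \<le> n"
proof
  have MS: "card S = m ^ 2" and
    Mi: "\<forall>i\<in>{1..m}. bij_betw (\<lambda>(j, k). M i j k) ({1..m} \<times> {1..m}) S" and
    Mj: "\<forall>j\<in>{1..m}. bij_betw (\<lambda>(i, k). M i j k) ({1..m} \<times> {1..m}) S" and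
    Mk: "\<forall>k\<in>{1..m}. bij_betw (\<lambda>(i, j). M i j k) ({1..m} \<times> {1..m}) S"
    using assms(3) unfolding layer_rainbow_def by auto
  {
    assume "\<exists>T L. layer_rainbow n T L \<and> extends_cube m S M n T L"
    then obtain T L where LR: "layer_rainbow n T L" and ext: "extends_cube m S M n T L" by blast
    have ST: "S \<subseteq> T" and LM: "\<forall>i\<in>{1..m}. \<forall>j\<in>{1..m}. \<forall>k\<in>{1..m}. L i j k = M i j k"
      using ext unfolding extends_cube_def by auto
    have Li: "\<forall>i\<in>{1..n}. bij_betw (\<lambda>(j, k). L i j k) ({1..n} \<times> {1..n}) T" and
      Lj: "\<forall>j\<in>{1..n}. bij_betw (\<lambda>(i, k). L i j k) ({1..n} \<times> {1..n}) T" and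
      Lk: "\<forall>k\<in>{1..n}. bij_betw (\<lambda>(i, j). L i j k) ({1..n} \<times> {1..n}) T"
      using LR unfolding layer_rainbow_def by auto
    define f where "f = (\<lambda>(i, j). L i j (m + 1))"
    have mn: "m + 1 \<in> {1..n}" using assms by simp
    have fb: "bij_betw f ({1..n} \<times> {1..n}) T" using Lk mn unfolding f_def by blast
    have sub: "S \<subseteq> f ` ({m+1..n} \<times> {m+1..n})"
    proof
      fix s assume s: "s \<in> S"
      then have "s \<in> f ` ({1..n} \<times> {1..n})" using fb ST unfolding bij_betw_def by blast
      then obtain i j where ij: "i \<in> {1..n}" "j \<in> {1..n}" and fs: "L i j (m + 1) = s" unfolding f_def by auto
      have "i > m"
      proof (rule ccontr)
        assume "\<not> m < i"
        then have iA: "i \<in> {1..m}" using ij by auto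
        then have "s \<in> (\<lambda>(j, k). M i j k) ` ({1..m} \<times> {1..m})" using Mi s unfolding bij_betw_def by blast
        then obtain j' k' where jk: "j' \<in> {1..m}" "k' \<in> {1..m}" "M i j' k' = s" by auto
        then have "L i j' k' = s" using LM iA by simp
        moreover have "inj_on (\<lambda>(j, k). L i j k) ({1..n} \<times> {1..n})" using Li ij unfolding bij_betw_def by blast
        moreover have "(j', k') \<in> {1..n} \<times> {1..n}" "(j, m + 1) \<in> {1..n} \<times> {1..n}" using jk ij mn assms by auto
        ultimately have "(j', k') = (j, m + 1)" using fs inj_onD[of "\<lambda>(j, k). L i j k" "{1..n} \<times> {1..n}" "(j', k')" "(j, m + 1)"] by auto
        then show False using jk by auto
      qed
      moreover have "j > m"
      proof (rule ccontr)
        assume "\<not> m < j"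
        then have jA: "j \<in> {1..m}" using ij by auto
        then have "s \<in> (\<lambda>(i, k). M i j k) ` ({1..m} \<times> {1..m})" using Mj s unfolding bij_betw_def by blast
        then obtain i' k' where ik: "i' \<in> {1..m}" "k' \<in> {1..m}" "M i' j k' = s" by auto
        then have "L i' j k' = s" using LM jA by simp
        moreover have "inj_on (\<lambda>(i, k). L i j k) ({1..n} \<times> {1..n})" using Lj ij unfolding bij_betw_def by blast
        moreover have "(i', k') \<in> {1..n} \<times> {1..n}" "(i, m + 1) \<in> {1..n} \<times> {1..n}" using ik ij mn assms by auto
        ultimately have "(i', k') = (i, m + 1)" using fs inj_onD[of "\<lambda>(i, k). L i j k" "{1..n} \<times> {1..n}" "(i', k')" "(i, m + 1)"] by auto
        then show False using ik by auto
      qed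
      ultimately show "s \<in> f ` ({m+1..n} \<times> {m+1..n})" using ij fs unfolding f_def by force
    qed
    have "card S \<le> card (f ` ({m+1..n} \<times> {m+1..n}))" using card_mono[OF finite_imageI[OF finite_cartesian_product[OF finite_atLeastAtMost finite_atLeastAtMost]] sub] .
    also have "\<dots> \<le> card ({m+1..n} \<times> {m+1..n})" by (rule card_image_le) simp
    also have "\<dots> = (n - m) * (n - m)" by (simp add: card_cartesian_product)
    finally have le: "m * m \<le> (n - m) * (n - m)" using MS by (simp add: power2_eq_square)
    have "m \<le> n - m"
    proof (rule ccontr)
      assume "\<not> m \<le> n - m"
      then have "(n - m) * (n - m) < m * m" using mult_strict_mono[of "n - m" m "n - m" m] by simp
      then show False using le by simp
    qed
    then show "2 * m \<le> n" by simp
  }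
  {
    assume nm: "2 * m \<le> n"
    obtain Q where Qr: "\<forall>i\<in>{1..n}. inj_on (Q i) {1..n}" and Qc: "\<forall>j\<in>{1..n}. inj_on (\<lambda>i. Q i j) {1..n}"
      and Qn: "\<forall>i\<in>{1..n}. \<forall>j\<in>{1..n}. Q i j < n" and Qm: "\<forall>i\<in>{1..m}. \<forall>j\<in>{1..m}. Q i j < m"
      using latin1[OF assms(1) nm] by blast
    define A where "A = {1..m}"
    define N where "N = {1..n}"
    define V where "V = {..<n} \<times> {..<n}"
    define V0 where "V0 = {..<m} \<times> {..<m}"
    have fS: "finite S" using MS assms(1) by (intro card_ge_0_finite) simp
    have "card V0 = card S" using MS unfolding V0_def by (simp add: card_cartesian_product power2_eq_square)
    then obtain \<psi> where psi: "bij_betw \<psi> V0 S" using finite_same_card_bij[of V0 S] fS unfolding V0_def by auto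
    define c where "c = Suc (Max S)"
    define enc where "enc = (\<lambda>p. c + prod_encode p)"
    have encinj: "inj_on enc (V - V0)" unfolding enc_def inj_on_def using inj_prod_encode[of UNIV]
      unfolding inj_on_def by simp
    have dis: "S \<inter> enc ` (V - V0) = {}"
    proof -
      have "s < enc p" if "s \<in> S" for s p
      proof -
        have "s \<le> Max S" using Max_ge[OF fS that] .
        then show ?thesis unfolding enc_def c_def by linarith
      qed
      then show ?thesis by blast
    qed
    have V0V: "V0 \<subseteq> V" unfolding V0_def V_def using assms by auto
    have AN: "A \<times> A \<subseteq> N \<times> N" unfolding A_def N_def using assms by auto
    have cA: "card (A \<times> A) = card V0" unfolding A_def V0_def by (simp add: card_cartesian_product)
    have cNV: "card (N \<times> N) = card V" unfolding N_def V_def by (simp add: card_cartesian_product)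
    have fNN: "finite (N \<times> N)" unfolding N_def by simp
    have fV: "finite V" unfolding V_def by simp
    define T where "T = S \<union> enc ` (V - V0)"
    define L where "L = (\<lambda>i j k. if i \<in> A \<and> j \<in> A \<and> k \<in> A then M i j k
        else if (Q i k, Q j k) \<in> V0 then \<psi> (Q i k, Q j k) else enc (Q i k, Q j k))"
    have QV: "\<And>i j k. i \<in> N \<Longrightarrow> j \<in> N \<Longrightarrow> k \<in> N \<Longrightarrow> (Q i k, Q j k) \<in> V"
      using Qn unfolding V_def N_def by auto
    have QV0: "\<And>i j k. i \<in> A \<Longrightarrow> j \<in> A \<Longrightarrow> k \<in> A \<Longrightarrow> (Q i k, Q j k) \<in> V0"
      using Qm unfolding V0_def A_def by auto
    have layerI: "bij_betw (\<lambda>(j, k). L i j k) (N \<times> N) T" if i: "i \<in> N" for i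
    proof -
      define F where "F = (\<lambda>(j, k). (Q i k, Q j k))"
      have "inj_on F (N \<times> N)"
      proof (rule inj_onI)
        fix u v assume u: "u \<in> N \<times> N" and v: "v \<in> N \<times> N" and e: "F u = F v"
        obtain j k where [simp]: "u = (j, k)" by fastforce
        obtain j' k' where [simp]: "v = (j', k')" by fastforce
        have "Q i k = Q i k'" "Q j k = Q j' k'" using e unfolding F_def by auto
        have "inj_on (Q i) N" using Qr i unfolding N_def by blast
        then have kk: "k = k'" using inj_onD[of "Q i" N k k'] \<open>Q i k = Q i k'\<close> u v by auto
        have "inj_on (\<lambda>i. Q i k) N" using Qc u unfolding N_def by auto
        then have "j = j'" using inj_onD[of "\<lambda>i. Q i k" N j j'] \<open>Q j k = Q j' k'\<close> kk u v by auto
        then show "u = v" using kk by simp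
      qed
      moreover have "F ` (N \<times> N) \<subseteq> V" using QV i unfolding F_def by auto
      ultimately have Fb: "bij_betw F (N \<times> N) V" using bij_from_inj cNV fV by blast
      show ?thesis
      proof (cases "i \<in> A")
        case True
        have FA: "F ` (A \<times> A) \<subseteq> V0" using QV0 True unfolding F_def by auto
        have Mb: "bij_betw (\<lambda>(j, k). M i j k) (A \<times> A) S" using Mi True unfolding A_def by blast
        have "bij_betw (\<lambda>u. if u \<in> A \<times> A then (\<lambda>(j, k). M i j k) u else if F u \<in> V0 then \<psi> (F u) else enc (F u)) (N \<times> N) T"
          using layer_in[OF Fb AN FA cA V0V fNN Mb encinj dis] unfolding T_def .
        then show ?thesis by (rule bij_betw_cong[THEN iffD1, rotated]) (auto simp: L_def F_def True split: if_splits)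
      next
        case False
        have "bij_betw (\<lambda>u. if F u \<in> V0 then \<psi> (F u) else enc (F u)) (N \<times> N) T"
          using layer_out[OF Fb V0V psi encinj dis] unfolding T_def .
        then show ?thesis by (rule bij_betw_cong[THEN iffD1, rotated]) (auto simp: L_def F_def False split: if_splits)
      qed
    qed
    have layerJ: "bij_betw (\<lambda>(i, k). L i j k) (N \<times> N) T" if j: "j \<in> N" for j
    proof -
      define F where "F = (\<lambda>(i, k). (Q i k, Q j k))"
      have "inj_on F (N \<times> N)"
      proof (rule inj_onI)
        fix u v assume u: "u \<in> N \<times> N" and v: "v \<in> N \<times> N" and e: "F u = F v"
        obtain i k where [simp]: "u = (i, k)" by fastforce
        obtain i' k' where [simp]: "v = (i', k')" by fastforce
        have "Q i k = Q i' k'" "Q j k = Q j k'" using e unfolding F_def by auto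
        have "inj_on (Q j) N" using Qr j unfolding N_def by blast
        then have kk: "k = k'" using inj_onD[of "Q j" N k k'] \<open>Q j k = Q j k'\<close> u v by auto
        have "inj_on (\<lambda>i. Q i k) N" using Qc u unfolding N_def by auto
        then have "i = i'" using inj_onD[of "\<lambda>i. Q i k" N i i'] \<open>Q i k = Q i' k'\<close> kk u v by auto
        then show "u = v" using kk by simp
      qed
      moreover have "F ` (N \<times> N) \<subseteq> V" using QV j unfolding F_def by auto
      ultimately have Fb: "bij_betw F (N \<times> N) V" using bij_from_inj cNV fV by blast
      show ?thesis
      proof (cases "j \<in> A")
        case True
        have FA: "F ` (A \<times> A) \<subseteq> V0" using QV0 True unfolding F_def by auto
        have Mb: "bij_betw (\<lambda>(i, k). M i j k) (A \<times> A) S" using Mj True unfolding A_def by blast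
        have "bij_betw (\<lambda>u. if u \<in> A \<times> A then (\<lambda>(i, k). M i j k) u else if F u \<in> V0 then \<psi> (F u) else enc (F u)) (N \<times> N) T"
          using layer_in[OF Fb AN FA cA V0V fNN Mb encinj dis] unfolding T_def .
        then show ?thesis by (rule bij_betw_cong[THEN iffD1, rotated]) (auto simp: L_def F_def True split: if_splits)
      next
        case False
        have "bij_betw (\<lambda>u. if F u \<in> V0 then \<psi> (F u) else enc (F u)) (N \<times> N) T"
          using layer_out[OF Fb V0V psi encinj dis] unfolding T_def .
        then show ?thesis by (rule bij_betw_cong[THEN iffD1, rotated]) (auto simp: L_def F_def False split: if_splits)
      qed
    qed
    have layerK: "bij_betw (\<lambda>(i, j). L i j k) (N \<times> N) T" if k: "k \<in> N" for k
    proof -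
      define F where "F = (\<lambda>(i, j). (Q i k, Q j k))"
      have "inj_on F (N \<times> N)"
      proof (rule inj_onI)
        fix u v assume u: "u \<in> N \<times> N" and v: "v \<in> N \<times> N" and e: "F u = F v"
        obtain i j where [simp]: "u = (i, j)" by fastforce
        obtain i' j' where [simp]: "v = (i', j')" by fastforce
        have "Q i k = Q i' k" "Q j k = Q j' k" using e unfolding F_def by auto
        have "inj_on (\<lambda>i. Q i k) N" using Qc k unfolding N_def by blast
        then have "i = i'" "j = j'" using inj_onD[of "\<lambda>i. Q i k" N] \<open>Q i k = Q i' k\<close> \<open>Q j k = Q j' k\<close> u v by auto
        then show "u = v" by simp
      qed
      moreover have "F ` (N \<times> N) \<subseteq> V" using QV k unfolding F_def by auto
      ultimately have Fb: "bij_betw F (N \<times> N) V" using bij_from_inj cNV fV by blast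
      show ?thesis
      proof (cases "k \<in> A")
        case True
        have FA: "F ` (A \<times> A) \<subseteq> V0" using QV0 True unfolding F_def by auto
        have Mb: "bij_betw (\<lambda>(i, j). M i j k) (A \<times> A) S" using Mk True unfolding A_def by blast
        have "bij_betw (\<lambda>u. if u \<in> A \<times> A then (\<lambda>(i, j). M i j k) u else if F u \<in> V0 then \<psi> (F u) else enc (F u)) (N \<times> N) T"
          using layer_in[OF Fb AN FA cA V0V fNN Mb encinj dis] unfolding T_def .
        then show ?thesis by (rule bij_betw_cong[THEN iffD1, rotated]) (auto simp: L_def F_def True split: if_splits)
      next
        case False
        have "bij_betw (\<lambda>u. if F u \<in> V0 then \<psi> (F u) else enc (F u)) (N \<times> N) T"
          using layer_out[OF Fb V0V psi encinj dis] unfolding T_def .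
        then show ?thesis by (rule bij_betw_cong[THEN iffD1, rotated]) (auto simp: L_def F_def False split: if_splits)
      qed
    qed
    have "1 \<in> N" unfolding N_def using assms by simp
    then have "card (N \<times> N) = card T" using layerI bij_betw_same_card by blast
    then have cT: "card T = n ^ 2" unfolding N_def by (simp add: card_cartesian_product power2_eq_square)
    have "layer_rainbow n T L" unfolding layer_rainbow_def using cT layerI layerJ layerK unfolding N_def by blast
    moreover have "extends_cube m S M n T L" unfolding extends_cube_def T_def L_def A_def by auto
    ultimately show "\<exists>T L. layer_rainbow n T L \<and> extends_cube m S M n T L" by blast
  }
qed

end
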